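(* Let $\phi\in\mathbb{R}$. Then there is a constant $c(\phi)>0$ such that for all $p\in(0,\infty)$ and each $\mathcal{E}_p\in\{\mathcal{U}_p,\mathcal{I}_p,\mathcal{M}_p\}$, \[ \mathcal{E}_p(E_\phi)\le c(\phi)^p\,\mathcal{E}_p(E_{\pi/2}). \]
   Context: For $\phi\in\mathbb{R}$ let $E_\phi=\big([0,1)\times\{0\}\big)\cup\{t(\cos\phi,\sin\phi):t\in[0,1)\}\subset\mathbb{R}^2$. For a set $X\subset\mathbb{R}^n$ and $x,y,z\in X$ define $\kappa(x,y,z)=1/r(x,y,z)$ if $x,y,z$ are pairwise distinct and $\kappa(x,y,z)=0$ otherwise, where $r(x,y,z)$ is the circumradius of $x,y,z$ (with $r=\infty$, i.e. $\kappa=0$, for collinear distinct points). Let $\kappa_i(x,y)=\sup_{z\in X}\kappa(x,y,z)$ and $\kappa_G(x)=\sup_{y,z\in X}\kappa(x,y,z)$. With $\mathcal{H}^1$ the one-dimensional Hausdorff measure restricted to $X$, define for $p\in(0,\infty)$ $\mathcal{M}_p(X)=\int_X\int_X\int_X\kappa^p(x,y,z)\,d\mathcal{H}^1(x)\,d\mathcal{H}^1(y)\,d\mathcal{H}^1(z)$, $\mathcal{I}_p(X)=\int_X\int_X\kappa_i^p(x,y)\,d\mathcal{H}^1(x)\,d\mathcal{H}^1(y)$, $\mathcal{U}_p(X)=\int_X\kappa_G^p(x)\,d\mathcal{H}^1(x)$. *)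

theory Defs
  imports "HOL-Analysis.Analysis"
begin

definition E_set :: "real \<Rightarrow> (real \<times> real) set" where
  "E_set \<phi> = {(t, 0) | t. 0 \<le> t \<and> t < 1} \<union> {(t * cos \<phi>, t * sin \<phi>) | t. 0 \<le> t \<and> t < 1}"

(* circumradius-based Menger curvature: 1 / circumradius for pairwise distinct points
   lying on a common circle (i.e. non-collinear), 0 otherwise *)
definition circumradius :: "'a::euclidean_space \<Rightarrow> 'a \<Rightarrow> 'a \<Rightarrow> real" where
  "circumradius x y z = (THE r. \<exists>c. dist c x = r \<and> dist c y = r \<and> dist c z = r)"

definition menger_kappa :: "'a::euclidean_space \<Rightarrow> 'a \<Rightarrow> 'a \<Rightarrow> real" where
  "menger_kappa x y z =
     (if x \<noteq> y \<and> y \<noteq> z \<and> x \<noteq> z \<and> (\<exists>c. dist c x = dist c y \<and> dist c y = dist c z)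
      then 1 / circumradius x y z else 0)"

definition kappa_i :: "'a::euclidean_space set \<Rightarrow> 'a \<Rightarrow> 'a \<Rightarrow> ennreal" where
  "kappa_i X x y = (SUP z\<in>X. ennreal (menger_kappa x y z))"

definition kappa_G :: "'a::euclidean_space set \<Rightarrow> 'a \<Rightarrow> ennreal" where
  "kappa_G X x = (SUP yz\<in>X \<times> X. ennreal (menger_kappa x (fst yz) (snd yz)))"

definition epow :: "ennreal \<Rightarrow> real \<Rightarrow> ennreal" where
  "epow t p = (if t = \<infinity> then \<infinity> else ennreal (enn2real t powr p))"

(* one-dimensional Hausdorff measure (normalised by diameters) *)
definition hausdorff1_delta :: "real \<Rightarrow> 'a::euclidean_space set \<Rightarrow> ennreal" where
  "hausdorff1_delta \<delta> A =
     (INF C\<in>{C :: nat \<Rightarrow> 'a set. A \<subseteq> (\<Union>i. C i) \<and> (\<forall>i. bounded (C i) \<and> diameter (C i) \<le> \<delta>)}.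
        (\<Sum>i. ennreal (diameter (C i))))"

definition hausdorff1_outer :: "'a::euclidean_space set \<Rightarrow> ennreal" where
  "hausdorff1_outer A = (SUP \<delta>\<in>{0<..}. hausdorff1_delta \<delta> A)"

definition H1 :: "'a::euclidean_space measure" where
  "H1 = measure_of UNIV (sets borel) hausdorff1_outer"

definition M_energy :: "real \<Rightarrow> 'a::euclidean_space set \<Rightarrow> ennreal" where
  "M_energy p X = (\<integral>\<^sup>+ x. \<integral>\<^sup>+ y. \<integral>\<^sup>+ z.
      indicator X x * indicator X y * indicator X z * ennreal (menger_kappa x y z powr p) \<partial>H1 \<partial>H1 \<partial>H1)"

definition I_energy :: "real \<Rightarrow> 'a::euclidean_space set \<Rightarrow> ennreal" where
  "I_energy p X = (\<integral>\<^sup>+ x. \<integral>\<^sup>+ y.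
      indicator X x * indicator X y * epow (kappa_i X x y) p \<partial>H1 \<partial>H1)"

definition U_energy :: "real \<Rightarrow> 'a::euclidean_space set \<Rightarrow> ennreal" where
  "U_energy p X = (\<integral>\<^sup>+ x. indicator X x * epow (kappa_G X x) p \<partial>H1)"

end

theory Submission imports Defs begin

lemma space_H1: "space H1 = UNIV" unfolding H1_def by (simp add: space_measure_of_conv)
lemma sets_H1: "sets H1 = sets borel" unfolding H1_def sets_measure_of_conv
  by (simp add: sets.sigma_sets_eq[of borel, simplified])

lemma emeasure_H1: fixes B :: "'a::euclidean_space set" shows "B \<in> sets borel \<Longrightarrow> emeasure H1 B =
   (if measure_space UNIV (sets borel) (hausdorff1_outer :: 'a set \<Rightarrow> ennreal) then hausdorff1_outer B else (0::ennreal))"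
proof -
  have e: "sigma_sets UNIV (sets borel) = (sets borel :: 'a::euclidean_space set set)"
    using sets.sigma_sets_eq[of borel] by simp
  assume "B \<in> sets borel" then show ?thesis unfolding H1_def emeasure_measure_of_conv e by simp
qed

lemma hd_preimage_le:
  fixes T :: "'a::euclidean_space \<Rightarrow> 'a"
  assumes iso: "\<And>x y. dist (T x) (T y) = dist x y"
  shows "hausdorff1_delta \<delta> (T -` B) \<le> hausdorff1_delta \<delta> B"
  unfolding hausdorff1_delta_def
proof (rule INF_mono)
  fix C assume C: "C \<in> {C :: nat \<Rightarrow> 'a set. B \<subseteq> (\<Union>i. C i) \<and> (\<forall>i. bounded (C i) \<and> diameter (C i) \<le> \<delta>)}"
  have bd: "bounded (T -` C i) \<and> diameter (T -` C i) \<le> diameter (C i)" for i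
  proof -
    have b: "bounded (C i)" using C by auto
    have d0: "0 \<le> diameter (C i)" using b by (rule diameter_ge_0)
    have le: "dist x y \<le> diameter (C i)" if "x \<in> T -` C i" "y \<in> T -` C i" for x y
      using diameter_bounded_bound[OF b, of "T x" "T y"] that iso by simp
    have "bounded (T -` C i)"
    proof (cases "T -` C i = {}")
      case True then show ?thesis by simp
    next
      case False then obtain a where "a \<in> T -` C i" by blast
      then show ?thesis unfolding bounded_def using le by blast
    qed
    moreover have "diameter (T -` C i) \<le> diameter (C i)"
      by (rule diameter_le) (use d0 le in \<open>auto simp: dist_norm\<close>)
    ultimately show ?thesis by simp
  qed
  show "\<exists>n\<in>{C :: nat \<Rightarrow> 'a set. T -` B \<subseteq> (\<Union>i. C i) \<and> (\<forall>i. bounded (C i) \<and> diameter (C i) \<le> \<delta>)}.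
          (\<Sum>i. ennreal (diameter (n i))) \<le> (\<Sum>i. ennreal (diameter (C i)))"
  proof (intro bexI[of _ "\<lambda>i. T -` C i"])
    show "(\<Sum>i. ennreal (diameter (T -` C i))) \<le> (\<Sum>i. ennreal (diameter (C i)))"
      using bd by (intro suminf_le) (auto intro: ennreal_leI)
  qed (use C bd in \<open>fastforce intro: order_trans\<close>)+
qed


definition Rot :: "real \<Rightarrow> real \<times> real \<Rightarrow> real \<times> real" where
  "Rot \<phi> p = (fst p * sin \<phi> + snd p * cos \<phi>, snd p * sin \<phi> - fst p * cos \<phi>)"
definition Roti :: "real \<Rightarrow> real \<times> real \<Rightarrow> real \<times> real" where
  "Roti \<phi> p = (fst p * sin \<phi> - snd p * cos \<phi>, fst p * cos \<phi> + snd p * sin \<phi>)"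

lemma Rot_Roti: "Rot \<phi> (Roti \<phi> p) = p"
proof -
  have "(sin \<phi>)\<^sup>2 + (cos \<phi>)\<^sup>2 = 1" by simp
  then show ?thesis unfolding Rot_def Roti_def
    by (cases p) (simp add: algebra_simps power2_eq_square flip: distrib_left)
qed

lemma Roti_Rot: "Roti \<phi> (Rot \<phi> p) = p"
proof -
  have "(sin \<phi>)\<^sup>2 + (cos \<phi>)\<^sup>2 = 1" by simp
  then show ?thesis unfolding Rot_def Roti_def
    by (cases p) (simp add: algebra_simps power2_eq_square flip: distrib_left)
qed

lemma dist_pair: "dist (a::real, b::real) (c, d) = sqrt ((a - c)\<^sup>2 + (b - d)\<^sup>2)"
  by (simp add: dist_Pair_Pair dist_real_def)

lemma dist_Rot: "dist (Rot \<phi> p) (Rot \<phi> q) = dist p q"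
proof -
  obtain a b where p: "p = (a,b)" by (cases p)
  obtain c d where q: "q = (c,d)" by (cases q)
  have e: "(sin \<phi>)\<^sup>2 + (cos \<phi>)\<^sup>2 = 1" by simp
  have "(a * sin \<phi> + b * cos \<phi> - (c * sin \<phi> + d * cos \<phi>))\<^sup>2 + (b * sin \<phi> - a * cos \<phi> - (d * sin \<phi> - c * cos \<phi>))\<^sup>2
      = ((a - c)\<^sup>2 + (b - d)\<^sup>2) * ((sin \<phi>)\<^sup>2 + (cos \<phi>)\<^sup>2)"
    unfolding power2_eq_square by algebra
  also have "\<dots> = (a - c)\<^sup>2 + (b - d)\<^sup>2" by (simp only: e mult_1_right)
  finally show ?thesis unfolding p q Rot_def dist_pair by simp
qed

lemma dist_Roti: "dist (Roti \<phi> p) (Roti \<phi> q) = dist p q"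
  by (metis Rot_Roti dist_Rot)

lemma hd_Rot: "hausdorff1_delta \<delta> (Rot \<phi> -` B) = hausdorff1_delta \<delta> B"
proof (rule antisym)
  show "hausdorff1_delta \<delta> (Rot \<phi> -` B) \<le> hausdorff1_delta \<delta> B"
    by (rule hd_preimage_le) (rule dist_Rot)
  have "hausdorff1_delta \<delta> (Roti \<phi> -` (Rot \<phi> -` B)) \<le> hausdorff1_delta \<delta> (Rot \<phi> -` B)"
    by (rule hd_preimage_le) (rule dist_Roti)
  moreover have "Roti \<phi> -` (Rot \<phi> -` B) = B" by (simp add: vimage_def Rot_Roti)
  ultimately show "hausdorff1_delta \<delta> B \<le> hausdorff1_delta \<delta> (Rot \<phi> -` B)" by simp
qed

lemma ho_Rot: "hausdorff1_outer (Rot \<phi> -` B) = hausdorff1_outer B"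
  unfolding hausdorff1_outer_def hd_Rot ..

lemma cont_Rot: "continuous_on UNIV (Rot \<phi>)"
  unfolding Rot_def by (intro continuous_intros)

lemma Rot_meas: "Rot \<phi> \<in> measurable H1 H1"
  using borel_measurable_continuous_onI[OF cont_Rot]
  by (simp add: measurable_cong_sets[OF sets_H1 sets_H1])

lemma distr_Rot: "distr H1 H1 (Rot \<phi>) = H1"
proof (rule measure_eqI)
  show "sets (distr H1 H1 (Rot \<phi>)) = sets H1" by simp
  fix A assume A: "A \<in> sets (distr H1 H1 (Rot \<phi>))"
  then have A': "A \<in> sets borel" by (simp add: sets_H1)
  have "Rot \<phi> -` A \<in> sets borel"
    using measurable_sets[OF Rot_meas, of A] A by (simp add: space_H1 sets_H1)
  then show "emeasure (distr H1 H1 (Rot \<phi>)) A = emeasure H1 A"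
    using A A' by (simp add: emeasure_distr[OF Rot_meas] space_H1 emeasure_H1 ho_Rot)
qed

lemma nn_Rot: assumes "g \<in> borel_measurable H1"
  shows "(\<integral>\<^sup>+x. g (Rot \<phi> x) \<partial>H1) = (\<integral>\<^sup>+x. g x \<partial>H1)"
proof -
  have "(\<integral>\<^sup>+x. g x \<partial>H1) = (\<integral>\<^sup>+x. g x \<partial>(distr H1 H1 (Rot \<phi>)))" by (simp add: distr_Rot)
  also have "\<dots> = (\<integral>\<^sup>+x. g (Rot \<phi> x) \<partial>H1)"
    by (rule nn_integral_distr[OF Rot_meas]) (simp add: assms)
  finally show ?thesis by simp
qed


definition Amap :: "real \<Rightarrow> real \<times> real \<Rightarrow> real \<times> real" where
  "Amap \<phi> p = (fst p + snd p * cos \<phi>, snd p * sin \<phi>)"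
definition L1 :: "(real \<times> real) set" where "L1 = {p. snd p = 0 \<and> 0 \<le> fst p \<and> fst p < 1}"
definition D0 :: "(real \<times> real) set" where "D0 = {p. fst p = 0 \<and> 0 < snd p \<and> snd p < 1}"

lemma fst_b: "(fst :: real\<times>real \<Rightarrow> real) \<in> borel_measurable borel"
  by (rule borel_measurable_continuous_onI) (intro continuous_intros)
lemma snd_b: "(snd :: real\<times>real \<Rightarrow> real) \<in> borel_measurable borel"
  by (rule borel_measurable_continuous_onI) (intro continuous_intros)
lemma L1_borel: "L1 \<in> sets borel"
proof -
  have "L1 = snd -` {0} \<inter> fst -` {0..<1}" by (auto simp: L1_def)
  moreover have "snd -` {0} \<in> sets (borel :: (real\<times>real) measure)" using measurable_sets[OF snd_b, of "{0}"] by simp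
  moreover have "fst -` {0..<1} \<in> sets (borel :: (real\<times>real) measure)" using measurable_sets[OF fst_b, of "{0..<1}"] by simp
  ultimately show ?thesis by (metis sets.Int)
qed
lemma D0_borel: "D0 \<in> sets borel"
proof -
  have "D0 = fst -` {0} \<inter> snd -` {0<..<1}" by (auto simp: D0_def)
  moreover have "fst -` {0} \<in> sets (borel :: (real\<times>real) measure)" using measurable_sets[OF fst_b, of "{0}"] by simp
  moreover have "snd -` {0<..<1} \<in> sets (borel :: (real\<times>real) measure)" using measurable_sets[OF snd_b, of "{0<..<1}"] by simp
  ultimately show ?thesis by (metis sets.Int)
qed

lemma ind_E: assumes s: "sin \<phi> \<noteq> 0"
  shows "indicator (E_set \<phi>) x = indicator L1 x + (indicator D0 (Roti \<phi> x) :: ennreal)"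
proof -
  obtain a b where x: "x = (a,b)" by (cases x)
  have e: "(sin \<phi>)\<^sup>2 + (cos \<phi>)\<^sup>2 = 1" by simp
  have "x \<in> E_set \<phi> \<longleftrightarrow> x \<in> L1 \<or> Roti \<phi> x \<in> D0"
  proof
    assume "x \<in> E_set \<phi>"
    then obtain t where t: "0 \<le> t" "t < 1" "x = (t,0) \<or> x = (t * cos \<phi>, t * sin \<phi>)"
      unfolding E_set_def by auto
    show "x \<in> L1 \<or> Roti \<phi> x \<in> D0"
    proof (cases "x = (t,0)")
      case True then show ?thesis using t by (simp add: L1_def)
    next
      case False
      then have x2: "x = (t * cos \<phi>, t * sin \<phi>)" using t by auto
      have r: "Roti \<phi> x = (0, t)" unfolding x2 Roti_def
        using e by (simp add: algebra_simps power2_eq_square flip: distrib_left)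
      show ?thesis
      proof (cases "t = 0")
        case True then show ?thesis using x2 by (simp add: L1_def)
      next
        case False then show ?thesis using r t by (simp add: D0_def)
      qed
    qed
  next
    assume "x \<in> L1 \<or> Roti \<phi> x \<in> D0"
    then show "x \<in> E_set \<phi>"
    proof
      assume "x \<in> L1" then show ?thesis unfolding E_set_def L1_def x by auto
    next
      assume "Roti \<phi> x \<in> D0"
      then obtain t where t: "0 < t" "t < 1" "Roti \<phi> x = (0,t)" unfolding D0_def
        by (cases "Roti \<phi> x") auto
      have "x = Rot \<phi> (0,t)" using t(3) by (metis Rot_Roti)
      then have "x = (t * cos \<phi>, t * sin \<phi>)" by (simp add: Rot_def)
      then show ?thesis unfolding E_set_def using t by auto
    qed
  qed
  moreover have "\<not> (x \<in> L1 \<and> Roti \<phi> x \<in> D0)"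
  proof
    assume h: "x \<in> L1 \<and> Roti \<phi> x \<in> D0"
    then have "x = Rot \<phi> (Roti \<phi> x)" by (simp add: Rot_Roti)
    moreover obtain t where "Roti \<phi> x = (0,t)" "0 < t" using h unfolding D0_def
      by (cases "Roti \<phi> x") auto
    ultimately have "snd x = t * sin \<phi>" by (simp add: Rot_def)
    then show False using h s \<open>0 < t\<close> by (simp add: L1_def)
  qed
  ultimately show ?thesis by (auto simp: indicator_def)
qed

lemma Roti_pi2: "Roti (pi/2) x = x" by (simp add: Roti_def)

lemma A_L1: "x \<in> L1 \<Longrightarrow> Amap \<phi> x = x" by (cases x) (simp add: Amap_def L1_def)
lemma A_D0: "x \<in> D0 \<Longrightarrow> Amap \<phi> x = Rot \<phi> x" by (cases x) (simp add: Amap_def D0_def Rot_def)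

lemma cont_Amap: "continuous_on UNIV (Amap \<phi>)" unfolding Amap_def by (intro continuous_intros)
lemma cont_Roti: "continuous_on UNIV (Roti \<phi>)" unfolding Roti_def by (intro continuous_intros)

lemma meas_H1_borel: "measurable H1 M = measurable borel M"
  by (rule measurable_cong_sets[OF sets_H1 refl])

lemma CV_meas:
  assumes s: "sin \<phi> \<noteq> 0" and g: "g \<in> borel_measurable H1"
  shows "(\<integral>\<^sup>+x. indicator (E_set \<phi>) x * g x \<partial>H1) = (\<integral>\<^sup>+x. indicator (E_set (pi/2)) x * g (Amap \<phi> x) \<partial>H1)"
proof -
  have gb: "g \<in> borel_measurable borel" using g by (simp add: meas_H1_borel)
  have Ab: "Amap \<phi> \<in> borel_measurable borel" by (rule borel_measurable_continuous_onI[OF cont_Amap])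
  have Rb: "Roti \<phi> \<in> borel_measurable borel" by (rule borel_measurable_continuous_onI[OF cont_Roti])
  have Rb2: "Rot \<phi> \<in> borel_measurable borel" by (rule borel_measurable_continuous_onI[OF cont_Rot])
  have mL: "(\<lambda>x. indicator L1 x :: ennreal) \<in> borel_measurable borel" using L1_borel by simp
  have mD: "(\<lambda>x. indicator D0 x :: ennreal) \<in> borel_measurable borel" using D0_borel by simp
  have s1: "sin (pi/2) \<noteq> 0" by simp
  have "(\<integral>\<^sup>+x. indicator (E_set \<phi>) x * g x \<partial>H1)
      = (\<integral>\<^sup>+x. indicator L1 x * g x + indicator D0 (Roti \<phi> x) * g x \<partial>H1)"
    by (simp add: ind_E[OF s] distrib_right)
  also have "\<dots> = (\<integral>\<^sup>+x. indicator L1 x * g x \<partial>H1) + (\<integral>\<^sup>+x. indicator D0 (Roti \<phi> x) * g x \<partial>H1)"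
    by (rule nn_integral_add) (use gb mL mD Rb in \<open>simp_all add: meas_H1_borel\<close>)
  also have "(\<integral>\<^sup>+x. indicator D0 (Roti \<phi> x) * g x \<partial>H1) = (\<integral>\<^sup>+x. indicator D0 (Roti \<phi> (Rot \<phi> x)) * g (Rot \<phi> x) \<partial>H1)"
    by (rule nn_Rot[symmetric, where g = "\<lambda>x. indicator D0 (Roti \<phi> x) * g x"]) (use gb mD Rb in \<open>simp add: meas_H1_borel\<close>)
  also have "\<dots> = (\<integral>\<^sup>+x. indicator D0 x * g (Amap \<phi> x) \<partial>H1)"
    by (rule nn_integral_cong) (auto simp: Roti_Rot A_D0 indicator_def)
  also have "(\<integral>\<^sup>+x. indicator L1 x * g x \<partial>H1) = (\<integral>\<^sup>+x. indicator L1 x * g (Amap \<phi> x) \<partial>H1)"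
    by (rule nn_integral_cong) (auto simp: A_L1 indicator_def)
  also have "(\<integral>\<^sup>+x. indicator L1 x * g (Amap \<phi> x) \<partial>H1) + (\<integral>\<^sup>+x. indicator D0 x * g (Amap \<phi> x) \<partial>H1)
     = (\<integral>\<^sup>+x. indicator L1 x * g (Amap \<phi> x) + indicator D0 x * g (Amap \<phi> x) \<partial>H1)"
    by (rule nn_integral_add[symmetric]) (use gb mL mD Ab in \<open>simp_all add: meas_H1_borel\<close>)
  also have "\<dots> = (\<integral>\<^sup>+x. indicator (E_set (pi/2)) x * g (Amap \<phi> x) \<partial>H1)"
    by (simp add: ind_E[OF s1] Roti_pi2 distrib_right)
  finally show ?thesis .
qed

lemma A_E: assumes "x \<in> E_set (pi/2)" shows "Amap \<phi> x \<in> E_set \<phi>"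
  using assms unfolding E_set_def Amap_def by auto

lemma CV:
  assumes s: "sin \<phi> \<noteq> 0"
  shows "(\<integral>\<^sup>+x. indicator (E_set \<phi>) x * f x \<partial>H1) \<le> (\<integral>\<^sup>+x. indicator (E_set (pi/2)) x * f (Amap \<phi> x) \<partial>H1)"
proof -
  have "(\<integral>\<^sup>+x. indicator (E_set \<phi>) x * f x \<partial>H1) =
     (SUP g \<in> {g. simple_function H1 g \<and> g \<le> (\<lambda>x. indicator (E_set \<phi>) x * f x)}. integral\<^sup>S H1 g)"
    by (simp add: nn_integral_def)
  also have "\<dots> \<le> (\<integral>\<^sup>+x. indicator (E_set (pi/2)) x * f (Amap \<phi> x) \<partial>H1)"
  proof (rule SUP_least)
    fix g assume "g \<in> {g. simple_function H1 g \<and> g \<le> (\<lambda>x. indicator (E_set \<phi>) x * f x)}"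
    then have sg: "simple_function H1 g" and le: "\<And>x. g x \<le> indicator (E_set \<phi>) x * f x"
      by (auto simp: le_fun_def)
    have gm: "g \<in> borel_measurable H1" using sg by (rule borel_measurable_simple_function)
    have "integral\<^sup>S H1 g = (\<integral>\<^sup>+x. g x \<partial>H1)" by (simp add: nn_integral_eq_simple_integral[OF sg])
    also have "\<dots> = (\<integral>\<^sup>+x. indicator (E_set \<phi>) x * g x \<partial>H1)"
    proof (rule nn_integral_cong)
      fix x show "g x = indicator (E_set \<phi>) x * g x"
        using le[of x] by (cases "x \<in> E_set \<phi>") auto
    qed
    also have "\<dots> = (\<integral>\<^sup>+x. indicator (E_set (pi/2)) x * g (Amap \<phi> x) \<partial>H1)"
      by (rule CV_meas[OF s gm])
    also have "\<dots> \<le> (\<integral>\<^sup>+x. indicator (E_set (pi/2)) x * f (Amap \<phi> x) \<partial>H1)"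
    proof (rule nn_integral_mono)
      fix x show "indicator (E_set (pi/2)) x * g (Amap \<phi> x) \<le> indicator (E_set (pi/2)) x * f (Amap \<phi> x)"
        using le[of "Amap \<phi> x"] A_E[of x \<phi>] by (cases "x \<in> E_set (pi/2)") auto
    qed
    finally show "integral\<^sup>S H1 g \<le> (\<integral>\<^sup>+x. indicator (E_set (pi/2)) x * f (Amap \<phi> x) \<partial>H1)" .
  qed
  finally show ?thesis .
qed


definition crs :: "real\<times>real \<Rightarrow> real\<times>real \<Rightarrow> real\<times>real \<Rightarrow> real" where
  "crs x y z = (fst y - fst x) * (snd z - snd x) - (snd y - snd x) * (fst z - fst x)"
definition kf :: "real\<times>real \<Rightarrow> real\<times>real \<Rightarrow> real\<times>real \<Rightarrow> real" where
  "kf x y z = 2 * \<bar>crs x y z\<bar> / (dist x y * dist y z * dist x z)"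

lemma equid:
  fixes c1 c2 x1 x2 y1 y2 z1 z2 :: real
  shows "(dist (c1,c2) (x1,x2) = dist (c1,c2) (y1,y2) \<and> dist (c1,c2) (y1,y2) = dist (c1,c2) (z1,z2)) \<longleftrightarrow>
    (2*((c1-x1)*(y1-x1) + (c2-x2)*(y2-x2)) = (y1-x1)\<^sup>2 + (y2-x2)\<^sup>2 \<and>
     2*((c1-x1)*(z1-x1) + (c2-x2)*(z2-x2)) = (z1-x1)\<^sup>2 + (z2-x2)\<^sup>2)"
proof -
  have a: "dist (c1,c2) (x1,x2) = dist (c1,c2) (y1,y2) \<longleftrightarrow> (c1-x1)\<^sup>2 + (c2-x2)\<^sup>2 = (c1-y1)\<^sup>2 + (c2-y2)\<^sup>2"
    by (simp add: dist_pair)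
  have b: "dist (c1,c2) (y1,y2) = dist (c1,c2) (z1,z2) \<longleftrightarrow> (c1-y1)\<^sup>2 + (c2-y2)\<^sup>2 = (c1-z1)\<^sup>2 + (c2-z2)\<^sup>2"
    by (simp add: dist_pair)
  have c: "(c1-x1)\<^sup>2 + (c2-x2)\<^sup>2 = (c1-y1)\<^sup>2 + (c2-y2)\<^sup>2 \<longleftrightarrow> 2*((c1-x1)*(y1-x1) + (c2-x2)*(y2-x2)) = (y1-x1)\<^sup>2 + (y2-x2)\<^sup>2"
    by (simp add: power2_eq_square algebra_simps)
  have d: "(c1-x1)\<^sup>2 + (c2-x2)\<^sup>2 = (c1-z1)\<^sup>2 + (c2-z2)\<^sup>2 \<longleftrightarrow> 2*((c1-x1)*(z1-x1) + (c2-x2)*(z2-x2)) = (z1-x1)\<^sup>2 + (z2-x2)\<^sup>2"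
    by (simp add: power2_eq_square algebra_simps)
  show ?thesis using a b c d by auto
qed

lemma collin_false:
  fixes w1 w2 u1 u2 v1 v2 :: real
  assumes e1: "2*(w1*u1 + w2*u2) = u1\<^sup>2 + u2\<^sup>2" and e2: "2*(w1 * v1 + w2 * v2) = v1\<^sup>2 + v2\<^sup>2"
    and D: "u1 * v2 - u2 * v1 = 0"
    and nu: "(u1,u2) \<noteq> (0,0)" and nv: "(v1,v2) \<noteq> (0,0)" and nuv: "(u1,u2) \<noteq> (v1,v2)"
  shows False
proof -
  let ?nu = "u1\<^sup>2 + u2\<^sup>2" and ?nv = "v1\<^sup>2 + v2\<^sup>2" and ?d = "u1 * v1 + u2 * v2"
  have f1: "?nu * v1 = ?nv * u1" using e1 e2 D by algebra
  have f2: "?nu * v2 = ?nv * u2" using e1 e2 D by algebra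
  have g1: "?nu * ?d = ?nv * ?nu" using f1 f2 by algebra
  have g2: "?nu * ?nv = ?nv * ?d" using f1 f2 by algebra
  have pnu: "?nu \<noteq> 0" using nu by (simp add: sum_power2_eq_zero_iff)
  have pnv: "?nv \<noteq> 0" using nv by (simp add: sum_power2_eq_zero_iff)
  have h1: "?d = ?nv" using g1 pnu by (metis mult.commute mult_left_cancel)
  have h2: "?d = ?nu" using g2 pnv by (metis mult.commute mult_left_cancel)
  have "(u1 - v1)\<^sup>2 + (u2 - v2)\<^sup>2 = ?nu + ?nv - 2 * ?d" by (simp add: power2_eq_square algebra_simps)
  also have "\<dots> = 0" using h1 h2 by simp
  finally have "u1 = v1 \<and> u2 = v2" by (simp add: sum_power2_eq_zero_iff)
  then show False using nuv by simp
qed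

lemma solve2:
  fixes w1 w2 u1 u2 v1 v2 :: real
  assumes e1: "2*(w1*u1 + w2*u2) = u1\<^sup>2 + u2\<^sup>2" and e2: "2*(w1 * v1 + w2 * v2) = v1\<^sup>2 + v2\<^sup>2"
    and D: "u1 * v2 - u2 * v1 \<noteq> 0"
  shows "w1 = ((u1\<^sup>2 + u2\<^sup>2) * v2 - (v1\<^sup>2 + v2\<^sup>2)*u2) / (2*(u1 * v2 - u2 * v1))"
    and "w2 = ((v1\<^sup>2 + v2\<^sup>2)*u1 - (u1\<^sup>2 + u2\<^sup>2) * v1) / (2*(u1 * v2 - u2 * v1))"
proof -
  have "w1 * (2*(u1 * v2 - u2 * v1)) = ((u1\<^sup>2 + u2\<^sup>2) * v2 - (v1\<^sup>2 + v2\<^sup>2)*u2)" using e1 e2 by algebra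
  then show "w1 = ((u1\<^sup>2 + u2\<^sup>2) * v2 - (v1\<^sup>2 + v2\<^sup>2)*u2) / (2*(u1 * v2 - u2 * v1))" using D
    by (simp add: eq_divide_eq)
  have "w2 * (2*(u1 * v2 - u2 * v1)) = ((v1\<^sup>2 + v2\<^sup>2)*u1 - (u1\<^sup>2 + u2\<^sup>2) * v1)" using e1 e2 by algebra
  then show "w2 = ((v1\<^sup>2 + v2\<^sup>2)*u1 - (u1\<^sup>2 + u2\<^sup>2) * v1) / (2*(u1 * v2 - u2 * v1))" using D
    by (simp add: eq_divide_eq)
qed

lemma exist2:
  fixes u1 u2 v1 v2 :: real
  assumes D: "u1 * v2 - u2 * v1 \<noteq> 0"
  defines "w1 \<equiv> ((u1\<^sup>2 + u2\<^sup>2) * v2 - (v1\<^sup>2 + v2\<^sup>2)*u2) / (2*(u1 * v2 - u2 * v1))"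
    and "w2 \<equiv> ((v1\<^sup>2 + v2\<^sup>2)*u1 - (u1\<^sup>2 + u2\<^sup>2) * v1) / (2*(u1 * v2 - u2 * v1))"
  shows "2*(w1*u1 + w2*u2) = u1\<^sup>2 + u2\<^sup>2" (is ?A) and "2*(w1 * v1 + w2 * v2) = v1\<^sup>2 + v2\<^sup>2" (is ?B)
    and "(w1\<^sup>2 + w2\<^sup>2) * (4 * (u1 * v2 - u2 * v1)\<^sup>2) = (u1\<^sup>2 + u2\<^sup>2) * (v1\<^sup>2 + v2\<^sup>2) * ((v1-u1)\<^sup>2 + (v2-u2)\<^sup>2)" (is ?C)
proof -
  have "w1*u1 + w2*u2 = (((u1\<^sup>2 + u2\<^sup>2) * v2 - (v1\<^sup>2 + v2\<^sup>2)*u2)*u1 + ((v1\<^sup>2 + v2\<^sup>2)*u1 - (u1\<^sup>2 + u2\<^sup>2) * v1)*u2) / (2*(u1 * v2 - u2 * v1))"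
    unfolding w1_def w2_def by (simp add: add_divide_distrib)
  also have "\<dots> = ((u1\<^sup>2 + u2\<^sup>2) * (u1 * v2 - u2 * v1)) / (2*(u1 * v2 - u2 * v1))"
    by (rule arg_cong[where f="\<lambda>t. t / _"]) algebra
  also have "\<dots> = (u1\<^sup>2 + u2\<^sup>2) / 2" using D by (simp add: field_simps)
  finally show ?A by simp
  have "w1 * v1 + w2 * v2 = (((u1\<^sup>2 + u2\<^sup>2) * v2 - (v1\<^sup>2 + v2\<^sup>2)*u2) * v1 + ((v1\<^sup>2 + v2\<^sup>2)*u1 - (u1\<^sup>2 + u2\<^sup>2) * v1) * v2) / (2*(u1 * v2 - u2 * v1))"
    unfolding w1_def w2_def by (simp add: add_divide_distrib)
  also have "\<dots> = ((v1\<^sup>2 + v2\<^sup>2) * (u1 * v2 - u2 * v1)) / (2*(u1 * v2 - u2 * v1))"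
    by (rule arg_cong[where f="\<lambda>t. t / _"]) algebra
  also have "\<dots> = (v1\<^sup>2 + v2\<^sup>2) / 2" using D by (simp add: field_simps)
  finally show ?B by simp
  define N1 where "N1 = (u1\<^sup>2 + u2\<^sup>2) * v2 - (v1\<^sup>2 + v2\<^sup>2)*u2"
  define N2 where "N2 = (v1\<^sup>2 + v2\<^sup>2)*u1 - (u1\<^sup>2 + u2\<^sup>2) * v1"
  define DD where "DD = u1 * v2 - u2 * v1"
  have "w1\<^sup>2 + w2\<^sup>2 = (N1\<^sup>2 + N2\<^sup>2) / (2*DD)\<^sup>2"
    unfolding w1_def w2_def N1_def N2_def DD_def by (simp add: power_divide add_divide_distrib)
  moreover have "(2*DD)\<^sup>2 = 4 * DD\<^sup>2" by (simp add: power_mult_distrib)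
  moreover have "DD \<noteq> 0" using D by (simp add: DD_def)
  ultimately have "(w1\<^sup>2 + w2\<^sup>2) * (4 * DD\<^sup>2) = N1\<^sup>2 + N2\<^sup>2" by simp
  also have "\<dots> = (u1\<^sup>2 + u2\<^sup>2) * (v1\<^sup>2 + v2\<^sup>2) * ((v1-u1)\<^sup>2 + (v2-u2)\<^sup>2)"
    unfolding N1_def N2_def by algebra
  finally show ?C by (simp add: DD_def)
qed


lemma mk_formula: "menger_kappa x y z = kf x y z"
proof -
  obtain x1 x2 where x: "x = (x1,x2)" by (cases x)
  obtain y1 y2 where y: "y = (y1,y2)" by (cases y)
  obtain z1 z2 where z: "z = (z1,z2)" by (cases z)
  define u1 where "u1 = y1 - x1"
  define u2 where "u2 = y2 - x2"
  define v1 where "v1 = z1 - x1"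
  define v2 where "v2 = z2 - x2"
  define nu where "nu = u1\<^sup>2 + u2\<^sup>2"
  define nv where "nv = v1\<^sup>2 + v2\<^sup>2"
  define nw where "nw = (v1-u1)\<^sup>2 + (v2-u2)\<^sup>2"
  define D where "D = u1 * v2 - u2 * v1"
  have dxy: "dist x y = sqrt nu" unfolding x y nu_def u1_def u2_def dist_pair
    by (simp add: power2_commute)
  have dxz: "dist x z = sqrt nv" unfolding x z nv_def v1_def v2_def dist_pair
    by (simp add: power2_commute)
  have dyz: "dist y z = sqrt nw" unfolding y z nw_def u1_def u2_def v1_def v2_def dist_pair
    by (simp add: power2_commute algebra_simps)
  have crsD: "crs x y z = D" unfolding crs_def x y z D_def u1_def u2_def v1_def v2_def by simp
  have eqs: "(dist c x = dist c y \<and> dist c y = dist c z) \<longleftrightarrow>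
      (2*((fst c - x1)*u1 + (snd c - x2)*u2) = u1\<^sup>2 + u2\<^sup>2 \<and> 2*((fst c - x1) * v1 + (snd c - x2) * v2) = v1\<^sup>2 + v2\<^sup>2)" for c
    using equid[of "fst c" "snd c" x1 x2 y1 y2 z1 z2] unfolding x y z u1_def u2_def v1_def v2_def
    by simp
  show ?thesis
  proof (cases "x \<noteq> y \<and> y \<noteq> z \<and> x \<noteq> z")
    case False
    then have "dist x y * dist y z * dist x z = 0" by auto
    then show ?thesis using False unfolding menger_kappa_def kf_def by auto
  next
    case dist: True
    have nu0: "(u1,u2) \<noteq> (0,0)" using dist unfolding x y u1_def u2_def by auto
    have nv0: "(v1,v2) \<noteq> (0,0)" using dist unfolding x z v1_def v2_def by auto
    have nuv: "(u1,u2) \<noteq> (v1,v2)" using dist unfolding y z u1_def u2_def v1_def v2_def by auto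
    show ?thesis
    proof (cases "D = 0")
      case True
      have nex: "\<not> (\<exists>c. dist c x = dist c y \<and> dist c y = dist c z)"
      proof
        assume "\<exists>c. dist c x = dist c y \<and> dist c y = dist c z"
        then obtain c where "dist c x = dist c y \<and> dist c y = dist c z" by blast
        then show False using eqs[of c] collin_false[OF _ _ _ nu0 nv0 nuv, of "fst c - x1" "snd c - x2"]
          True by (simp add: D_def)
      qed
      have "menger_kappa x y z = 0" unfolding menger_kappa_def using nex by (intro if_not_P) blast
      moreover have "kf x y z = 0" using True by (simp add: kf_def crsD)
      ultimately show ?thesis by simp
    next
      case False
      define W1 where "W1 = ((u1\<^sup>2 + u2\<^sup>2) * v2 - (v1\<^sup>2 + v2\<^sup>2)*u2) / (2*(u1 * v2 - u2 * v1))"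
      define W2 where "W2 = ((v1\<^sup>2 + v2\<^sup>2)*u1 - (u1\<^sup>2 + u2\<^sup>2) * v1) / (2*(u1 * v2 - u2 * v1))"
      have D': "u1 * v2 - u2 * v1 \<noteq> 0" using False by (simp add: D_def)
      note ex = exist2[OF D', folded W1_def W2_def]
      define R where "R = sqrt (W1\<^sup>2 + W2\<^sup>2)"
      define c0 where "c0 = (x1 + W1, x2 + W2)"
      have c0: "dist c0 x = dist c0 y \<and> dist c0 y = dist c0 z" using eqs[of c0] ex(1,2) by (simp add: c0_def)
      have c0x: "dist c0 x = R" unfolding c0_def x R_def dist_pair by simp
      have cr: "circumradius x y z = R"
        unfolding circumradius_def
      proof (rule the_equality)
        show "\<exists>c. dist c x = R \<and> dist c y = R \<and> dist c z = R" using c0 c0x by metis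
        fix r assume "\<exists>c. dist c x = r \<and> dist c y = r \<and> dist c z = r"
        then obtain c where c: "dist c x = r" "dist c y = r" "dist c z = r" by blast
        then have "2*((fst c - x1)*u1 + (snd c - x2)*u2) = u1\<^sup>2 + u2\<^sup>2 \<and> 2*((fst c - x1) * v1 + (snd c - x2) * v2) = v1\<^sup>2 + v2\<^sup>2"
          using eqs[of c] by simp
        then have "fst c - x1 = W1" "snd c - x2 = W2" using solve2[OF _ _ D'] unfolding W1_def W2_def by blast+
        then show "r = R" using c(1) unfolding x R_def by (cases c) (simp add: dist_pair power2_commute)
      qed
      have "W1\<^sup>2 + W2\<^sup>2 = nu * nv * nw / (4 * D\<^sup>2)"
        using ex(3) False unfolding nu_def nv_def nw_def D_def by (simp add: eq_divide_eq)
      then have "R = sqrt nu * sqrt nv * sqrt nw / (2 * \<bar>D\<bar>)"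
        unfolding R_def by (simp add: real_sqrt_mult real_sqrt_divide real_sqrt_abs)
      then have "1 / circumradius x y z = 2 * \<bar>D\<bar> / (sqrt nu * sqrt nw * sqrt nv)" using cr by (simp add: ac_simps)
      moreover have "\<exists>c. dist c x = dist c y \<and> dist c y = dist c z" using c0 by blast
      ultimately show ?thesis unfolding menger_kappa_def kf_def crsD dxy dxz dyz using dist by simp
    qed
  qed
qed


lemma dist_A:
  assumes s: "sin \<phi> \<noteq> 0"
  shows "dist p q \<le> (1 + 2 / \<bar>sin \<phi>\<bar>) * dist (Amap \<phi> p) (Amap \<phi> q)"
proof -
  obtain a b where p: "p = (a,b)" by (cases p)
  obtain c d where q: "q = (c,d)" by (cases q)
  define e1 where "e1 = a - c"
  define e2 where "e2 = b - d"
  define \<alpha> where "\<alpha> = e1 + e2 * cos \<phi>"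
  define \<beta> where "\<beta> = e2 * sin \<phi>"
  define N where "N = sqrt (\<alpha>\<^sup>2 + \<beta>\<^sup>2)"
  have dN: "dist (Amap \<phi> p) (Amap \<phi> q) = N"
    unfolding p q Amap_def dist_pair N_def \<alpha>_def \<beta>_def e1_def e2_def by (simp add: algebra_simps)
  have dpq: "dist p q = sqrt (e1\<^sup>2 + e2\<^sup>2)" unfolding p q dist_pair e1_def e2_def ..
  have aN: "\<bar>\<alpha>\<bar> \<le> N" and bN: "\<bar>\<beta>\<bar> \<le> N" unfolding N_def by simp_all
  have sp: "0 < \<bar>sin \<phi>\<bar>" using s by simp
  have e2b: "\<bar>e2\<bar> \<le> N / \<bar>sin \<phi>\<bar>"
  proof -
    have "\<bar>e2\<bar> * \<bar>sin \<phi>\<bar> \<le> N" using bN unfolding \<beta>_def by (simp add: abs_mult)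
    then show ?thesis using sp by (simp add: le_divide_eq)
  qed
  have "\<bar>e2 * cos \<phi>\<bar> \<le> \<bar>e2\<bar>" by (simp add: abs_mult mult_left_le)
  then have e1b: "\<bar>e1\<bar> \<le> N + N / \<bar>sin \<phi>\<bar>" using aN e2b unfolding \<alpha>_def by linarith
  have "dist p q \<le> \<bar>e1\<bar> + \<bar>e2\<bar>" unfolding dpq by (rule sqrt_sum_squares_le_sum_abs)
  also have "\<dots> \<le> N + 2 * (N / \<bar>sin \<phi>\<bar>)" using e1b e2b by linarith
  also have "\<dots> = (1 + 2 / \<bar>sin \<phi>\<bar>) * N" by (simp add: algebra_simps)
  finally show ?thesis using dN by simp
qed

lemma crs_A: "crs (Amap \<phi> x) (Amap \<phi> y) (Amap \<phi> z) = sin \<phi> * crs x y z"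
  unfolding crs_def Amap_def by simp algebra

lemma kf_nonneg: "0 \<le> kf x y z" unfolding kf_def by simp

lemma kf_A:
  assumes s: "sin \<phi> \<noteq> 0"
  shows "kf (Amap \<phi> x) (Amap \<phi> y) (Amap \<phi> z) \<le> (\<bar>sin \<phi>\<bar> * (1 + 2 / \<bar>sin \<phi>\<bar>)^3) * kf x y z"
proof -
  define K where "K = 1 + 2 / \<bar>sin \<phi>\<bar>"
  have K0: "0 < K" unfolding K_def by (simp add: add_pos_nonneg)
  note dA = dist_A[OF s, folded K_def]
  show ?thesis
  proof (cases "x = y \<or> y = z \<or> x = z")
    case True
    then have "kf (Amap \<phi> x) (Amap \<phi> y) (Amap \<phi> z) = 0" unfolding kf_def by auto
    moreover have "0 \<le> (\<bar>sin \<phi>\<bar> * K^3) * kf x y z" using K0 kf_nonneg by simp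
    ultimately show ?thesis by (simp add: K_def)
  next
    case False
    define P where "P = dist x y * dist y z * dist x z"
    define PA where "PA = dist (Amap \<phi> x) (Amap \<phi> y) * dist (Amap \<phi> y) (Amap \<phi> z) * dist (Amap \<phi> x) (Amap \<phi> z)"
    have P0: "0 < P" unfolding P_def using False by simp
    have "P \<le> (K * dist (Amap \<phi> x) (Amap \<phi> y)) * (K * dist (Amap \<phi> y) (Amap \<phi> z)) * (K * dist (Amap \<phi> x) (Amap \<phi> z))"
      unfolding P_def by (intro mult_mono dA) (auto intro!: mult_nonneg_nonneg K0[THEN less_imp_le])
    also have "\<dots> = K^3 * PA" unfolding PA_def by (simp add: power3_eq_cube ac_simps)
    finally have PP: "P \<le> K^3 * PA" .
    then have PA0: "0 < PA" using P0 K0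
      by (metis PA_def mult_eq_0_iff order_less_le zero_le_dist mult_nonneg_nonneg zero_less_power zero_le_mult_iff order_le_less_trans mult_pos_pos linorder_not_le)
    have inv: "1 / PA \<le> K^3 / P" using PP P0 PA0 by (simp add: divide_simps mult.commute)
    have "kf (Amap \<phi> x) (Amap \<phi> y) (Amap \<phi> z) = (2 * \<bar>sin \<phi>\<bar> * \<bar>crs x y z\<bar>) * (1 / PA)"
      unfolding kf_def crs_A PA_def by (simp add: abs_mult)
    also have "\<dots> \<le> (2 * \<bar>sin \<phi>\<bar> * \<bar>crs x y z\<bar>) * (K^3 / P)" by (rule mult_left_mono[OF inv]) simp
    also have "\<dots> = (\<bar>sin \<phi>\<bar> * K^3) * kf x y z" unfolding kf_def P_def by simp
    finally show ?thesis by (simp add: K_def)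
  qed
qed


lemma cmult_le:
  assumes r: "0 < r"
  shows "(\<integral>\<^sup>+x. ennreal r * f x \<partial>M) \<le> ennreal r * integral\<^sup>N M f"
proof -
  have inv: "ennreal r * ennreal (1/r) = 1" using r by (simp flip: ennreal_mult)
  have "(\<integral>\<^sup>+x. ennreal r * f x \<partial>M) = (SUP g \<in> {g. simple_function M g \<and> g \<le> (\<lambda>x. ennreal r * f x)}. integral\<^sup>S M g)"
    by (simp add: nn_integral_def)
  also have "\<dots> \<le> ennreal r * integral\<^sup>N M f"
  proof (rule SUP_least)
    fix g assume "g \<in> {g. simple_function M g \<and> g \<le> (\<lambda>x. ennreal r * f x)}"
    then have sg: "simple_function M g" and le: "\<And>x. g x \<le> ennreal r * f x" by (auto simp: le_fun_def)
    define h where "h x = ennreal (1/r) * g x" for x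
    have sh: "simple_function M h" unfolding h_def by (rule simple_function_compose1[OF sg])
    have gh: "g x = ennreal r * h x" for x unfolding h_def by (simp add: mult.assoc[symmetric] inv)
    have hf: "h x \<le> f x" for x
    proof -
      have "h x \<le> ennreal (1/r) * (ennreal r * f x)" unfolding h_def by (rule mult_left_mono[OF le]) simp
      also have "\<dots> = f x" by (simp add: mult.assoc[symmetric] inv mult.commute[of "ennreal (1/r)"])
      finally show ?thesis .
    qed
    have "integral\<^sup>S M g = (\<integral>\<^sup>+x. g x \<partial>M)" by (simp add: nn_integral_eq_simple_integral[OF sg])
    also have "\<dots> = (\<integral>\<^sup>+x. ennreal r * h x \<partial>M)" by (simp add: gh)
    also have "\<dots> = ennreal r * (\<integral>\<^sup>+x. h x \<partial>M)"
      by (rule nn_integral_cmult) (rule borel_measurable_simple_function[OF sh])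
    also have "\<dots> \<le> ennreal r * integral\<^sup>N M f" by (intro mult_left_mono nn_integral_mono hf) simp
    finally show "integral\<^sup>S M g \<le> ennreal r * integral\<^sup>N M f" .
  qed
  finally show ?thesis .
qed

lemma E_cover: assumes "z \<in> E_set \<phi>" shows "\<exists>z'\<in>E_set (pi/2). z = Amap \<phi> z'"
proof -
  obtain t where t: "0 \<le> t" "t < 1" "z = (t,0) \<or> z = (t * cos \<phi>, t * sin \<phi>)"
    using assms unfolding E_set_def by auto
  then show ?thesis
  proof (cases "z = (t,0)")
    case True then show ?thesis using t by (intro bexI[of _ "(t,0)"]) (auto simp: Amap_def E_set_def)
  next
    case False then have "z = (t * cos \<phi>, t * sin \<phi>)" using t by auto
    then show ?thesis using t by (intro bexI[of _ "(0,t)"]) (auto simp: Amap_def E_set_def)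
  qed
qed

definition CC :: "real \<Rightarrow> real" where "CC \<phi> = \<bar>sin \<phi>\<bar> * (1 + 2 / \<bar>sin \<phi>\<bar>)^3"

lemma CC_pos: "sin \<phi> \<noteq> 0 \<Longrightarrow> 0 < CC \<phi>" unfolding CC_def by (simp add: add_pos_nonneg)

lemma mk_A: "sin \<phi> \<noteq> 0 \<Longrightarrow> menger_kappa (Amap \<phi> x) (Amap \<phi> y) (Amap \<phi> z) \<le> CC \<phi> * menger_kappa x y z"
  unfolding mk_formula CC_def by (rule kf_A)

lemma mk_nonneg: "0 \<le> menger_kappa (x::real\<times>real) y z" unfolding mk_formula by (rule kf_nonneg)

lemma ki_A:
  assumes s: "sin \<phi> \<noteq> 0"
  shows "kappa_i (E_set \<phi>) (Amap \<phi> x) (Amap \<phi> y) \<le> ennreal (CC \<phi>) * kappa_i (E_set (pi/2)) x y"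
  unfolding kappa_i_def
proof (rule SUP_least)
  fix z assume "z \<in> E_set \<phi>"
  then obtain z' where z': "z' \<in> E_set (pi/2)" "z = Amap \<phi> z'" using E_cover by blast
  have "ennreal (menger_kappa (Amap \<phi> x) (Amap \<phi> y) z) \<le> ennreal (CC \<phi> * menger_kappa x y z')"
    using mk_A[OF s] z' by (intro ennreal_leI) simp
  also have "\<dots> = ennreal (CC \<phi>) * ennreal (menger_kappa x y z')"
    using CC_pos[OF s] mk_nonneg by (intro ennreal_mult) auto
  also have "\<dots> \<le> ennreal (CC \<phi>) * (SUP z\<in>E_set (pi/2). ennreal (menger_kappa x y z))"
    by (intro mult_left_mono SUP_upper z') simp
  finally show "ennreal (menger_kappa (Amap \<phi> x) (Amap \<phi> y) z) \<le> ennreal (CC \<phi>) * (SUP z\<in>E_set (pi/2). ennreal (menger_kappa x y z))" .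
qed

lemma kG_A:
  assumes s: "sin \<phi> \<noteq> 0"
  shows "kappa_G (E_set \<phi>) (Amap \<phi> x) \<le> ennreal (CC \<phi>) * kappa_G (E_set (pi/2)) x"
  unfolding kappa_G_def
proof (rule SUP_least)
  fix yz assume "yz \<in> E_set \<phi> \<times> E_set \<phi>"
  then obtain y' z' where yz: "y' \<in> E_set (pi/2)" "z' \<in> E_set (pi/2)" "fst yz = Amap \<phi> y'" "snd yz = Amap \<phi> z'"
    using E_cover by (metis mem_Times_iff)
  have "ennreal (menger_kappa (Amap \<phi> x) (fst yz) (snd yz)) \<le> ennreal (CC \<phi> * menger_kappa x y' z')"
    using mk_A[OF s] yz by (intro ennreal_leI) simp
  also have "\<dots> = ennreal (CC \<phi>) * ennreal (menger_kappa x (fst (y',z')) (snd (y',z')))"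
    using CC_pos[OF s] mk_nonneg by (simp add: ennreal_mult)
  also have "\<dots> \<le> ennreal (CC \<phi>) * (SUP yz\<in>E_set (pi/2) \<times> E_set (pi/2). ennreal (menger_kappa x (fst yz) (snd yz)))"
    by (intro mult_left_mono SUP_upper) (use yz in auto)
  finally show "ennreal (menger_kappa (Amap \<phi> x) (fst yz) (snd yz)) \<le> ennreal (CC \<phi>) * (SUP yz\<in>E_set (pi/2) \<times> E_set (pi/2). ennreal (menger_kappa x (fst yz) (snd yz)))" .
qed

lemma epow_mono: "a \<le> b \<Longrightarrow> 0 < p \<Longrightarrow> epow a p \<le> epow b p"
  unfolding epow_def
  by (auto intro!: ennreal_leI powr_mono2 enn2real_mono simp: top_unique[symmetric] less_top)

lemma epow_cmult: assumes "0 < C" "0 < p" shows "epow (ennreal C * t) p = ennreal (C powr p) * epow t p"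
proof (cases "t = \<infinity>")
  case True
  have "ennreal C * t = \<infinity>" using True assms by (simp add: ennreal_mult_eq_top_iff)
  then show ?thesis using True assms by (simp add: epow_def ennreal_mult_top)
next
  case False
  then have f: "ennreal C * t \<noteq> \<infinity>" using assms by (simp add: ennreal_mult_eq_top_iff)
  have "enn2real (ennreal C * t) = C * enn2real t" using assms by (simp add: enn2real_mult)
  then show ?thesis using False f assms
    by (simp add: epow_def powr_mult ennreal_mult enn2real_nonneg)
qed


lemma pull: "(\<integral>\<^sup>+y. indicator S x * f y \<partial>M) = (indicator S x :: ennreal) * (\<integral>\<^sup>+y. f y \<partial>M)"
  by (cases "x \<in> S") simp_all

lemma lift:
  assumes r: "0 < r" and le: "\<And>x. f x \<le> ennreal r * g x"
  shows "(\<integral>\<^sup>+x. h x * f x \<partial>M) \<le> ennreal r * (\<integral>\<^sup>+x. h x * g x \<partial>M)"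
proof -
  have "(\<integral>\<^sup>+x. h x * f x \<partial>M) \<le> (\<integral>\<^sup>+x. ennreal r * (h x * g x) \<partial>M)"
  proof (rule nn_integral_mono)
    fix x
    have "h x * f x \<le> h x * (ennreal r * g x)" by (rule mult_left_mono[OF le]) simp
    then show "h x * f x \<le> ennreal r * (h x * g x)" by (simp add: ac_simps)
  qed
  also have "\<dots> \<le> ennreal r * (\<integral>\<^sup>+x. h x * g x \<partial>M)" by (rule cmult_le[OF r])
  finally show ?thesis .
qed

lemma zero_case:
  assumes s: "sin \<phi> = 0" and "x \<in> E_set \<phi>" "y \<in> E_set \<phi>" "z \<in> E_set \<phi>"
  shows "menger_kappa x y z = 0"
proof -
  have "snd w = 0" if "w \<in> E_set \<phi>" for w using that s unfolding E_set_def by auto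
  then have "crs x y z = 0" using assms unfolding crs_def by simp
  then show ?thesis unfolding mk_formula kf_def by simp
qed

lemma M_main:
  assumes s: "sin \<phi> \<noteq> 0" and p: "0 < p"
  shows "M_energy p (E_set \<phi>) \<le> ennreal (CC \<phi> powr p) * M_energy p (E_set (pi/2))"
proof -
  define i where "i = (indicator (E_set \<phi>) :: real\<times>real \<Rightarrow> ennreal)"
  define j where "j = (indicator (E_set (pi/2)) :: real\<times>real \<Rightarrow> ennreal)"
  define K where "K x y z = ennreal (menger_kappa x y z powr p)" for x y z :: "real\<times>real"
  define A where "A = Amap \<phi>"
  have cp: "0 < CC \<phi> powr p" using CC_pos[OF s] by simp
  have Kb: "K (A x) (A y) (A z) \<le> ennreal (CC \<phi> powr p) * K x y z" for x y z
  proof -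
    have "menger_kappa (A x) (A y) (A z) powr p \<le> (CC \<phi> * menger_kappa x y z) powr p"
      unfolding A_def using mk_A[OF s] mk_nonneg p by (intro powr_mono2) auto
    also have "\<dots> = CC \<phi> powr p * menger_kappa x y z powr p"
      using CC_pos[OF s] mk_nonneg by (simp add: powr_mult)
    finally show ?thesis unfolding K_def using cp by (simp add: ennreal_mult[symmetric] ennreal_leI)
  qed
  have "M_energy p (E_set \<phi>) = (\<integral>\<^sup>+x. i x * (\<integral>\<^sup>+y. i y * (\<integral>\<^sup>+z. i z * K x y z \<partial>H1) \<partial>H1) \<partial>H1)"
    unfolding M_energy_def i_def K_def by (simp add: mult.assoc pull)
  also have "\<dots> \<le> (\<integral>\<^sup>+x. i x * (\<integral>\<^sup>+y. i y * (\<integral>\<^sup>+z. j z * K x y (A z) \<partial>H1) \<partial>H1) \<partial>H1)"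
    unfolding i_def j_def A_def by (intro nn_integral_mono mult_left_mono CV[OF s]) simp_all
  also have "\<dots> \<le> (\<integral>\<^sup>+x. i x * (\<integral>\<^sup>+y. j y * (\<integral>\<^sup>+z. j z * K x (A y) (A z) \<partial>H1) \<partial>H1) \<partial>H1)"
    unfolding i_def j_def A_def
    by (intro nn_integral_mono mult_left_mono CV[OF s, where f = "\<lambda>y. \<integral>\<^sup>+z. indicator (E_set (pi/2)) z * K _ y (Amap \<phi> z) \<partial>H1"]) simp_all
  also have "\<dots> \<le> (\<integral>\<^sup>+x. j x * (\<integral>\<^sup>+y. j y * (\<integral>\<^sup>+z. j z * K (A x) (A y) (A z) \<partial>H1) \<partial>H1) \<partial>H1)"
    unfolding i_def j_def A_def
    by (rule CV[OF s, where f = "\<lambda>x. \<integral>\<^sup>+y. indicator (E_set (pi/2)) y * (\<integral>\<^sup>+z. indicator (E_set (pi/2)) z * K x (Amap \<phi> y) (Amap \<phi> z) \<partial>H1) \<partial>H1"])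
  also have "\<dots> \<le> ennreal (CC \<phi> powr p) * (\<integral>\<^sup>+x. j x * (\<integral>\<^sup>+y. j y * (\<integral>\<^sup>+z. j z * K x y z \<partial>H1) \<partial>H1) \<partial>H1)"
    by (intro lift[OF cp] Kb)
  also have "(\<integral>\<^sup>+x. j x * (\<integral>\<^sup>+y. j y * (\<integral>\<^sup>+z. j z * K x y z \<partial>H1) \<partial>H1) \<partial>H1) = M_energy p (E_set (pi/2))"
    unfolding M_energy_def j_def K_def by (simp add: mult.assoc pull)
  finally show ?thesis .
qed

lemma I_main:
  assumes s: "sin \<phi> \<noteq> 0" and p: "0 < p"
  shows "I_energy p (E_set \<phi>) \<le> ennreal (CC \<phi> powr p) * I_energy p (E_set (pi/2))"
proof -
  define i where "i = (indicator (E_set \<phi>) :: real\<times>real \<Rightarrow> ennreal)"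
  define j where "j = (indicator (E_set (pi/2)) :: real\<times>real \<Rightarrow> ennreal)"
  define K where "K x y = epow (kappa_i (E_set \<phi>) x y) p" for x y :: "real\<times>real"
  define K0 where "K0 x y = epow (kappa_i (E_set (pi/2)) x y) p" for x y :: "real\<times>real"
  define A where "A = Amap \<phi>"
  have cp: "0 < CC \<phi> powr p" using CC_pos[OF s] by simp
  have Kb: "K (A x) (A y) \<le> ennreal (CC \<phi> powr p) * K0 x y" for x y
  proof -
    have "K (A x) (A y) \<le> epow (ennreal (CC \<phi>) * kappa_i (E_set (pi/2)) x y) p"
      unfolding K_def A_def by (rule epow_mono[OF ki_A[OF s] p])
    also have "\<dots> = ennreal (CC \<phi> powr p) * K0 x y" unfolding K0_def by (rule epow_cmult[OF CC_pos[OF s] p])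
    finally show ?thesis .
  qed
  have "I_energy p (E_set \<phi>) = (\<integral>\<^sup>+x. i x * (\<integral>\<^sup>+y. i y * K x y \<partial>H1) \<partial>H1)"
    unfolding I_energy_def i_def K_def by (simp add: mult.assoc pull)
  also have "\<dots> \<le> (\<integral>\<^sup>+x. i x * (\<integral>\<^sup>+y. j y * K x (A y) \<partial>H1) \<partial>H1)"
    unfolding i_def j_def A_def by (intro nn_integral_mono mult_left_mono CV[OF s]) simp_all
  also have "\<dots> \<le> (\<integral>\<^sup>+x. j x * (\<integral>\<^sup>+y. j y * K (A x) (A y) \<partial>H1) \<partial>H1)"
    unfolding i_def j_def A_def
    by (rule CV[OF s, where f = "\<lambda>x. \<integral>\<^sup>+y. indicator (E_set (pi/2)) y * K x (Amap \<phi> y) \<partial>H1"])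
  also have "\<dots> \<le> ennreal (CC \<phi> powr p) * (\<integral>\<^sup>+x. j x * (\<integral>\<^sup>+y. j y * K0 x y \<partial>H1) \<partial>H1)"
    by (intro lift[OF cp] Kb)
  also have "(\<integral>\<^sup>+x. j x * (\<integral>\<^sup>+y. j y * K0 x y \<partial>H1) \<partial>H1) = I_energy p (E_set (pi/2))"
    unfolding I_energy_def j_def K0_def by (simp add: mult.assoc pull)
  finally show ?thesis .
qed

lemma U_main:
  assumes s: "sin \<phi> \<noteq> 0" and p: "0 < p"
  shows "U_energy p (E_set \<phi>) \<le> ennreal (CC \<phi> powr p) * U_energy p (E_set (pi/2))"
proof -
  have cp: "0 < CC \<phi> powr p" using CC_pos[OF s] by simp
  have Kb: "epow (kappa_G (E_set \<phi>) (Amap \<phi> x)) p \<le> ennreal (CC \<phi> powr p) * epow (kappa_G (E_set (pi/2)) x) p" for x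
  proof -
    have "epow (kappa_G (E_set \<phi>) (Amap \<phi> x)) p \<le> epow (ennreal (CC \<phi>) * kappa_G (E_set (pi/2)) x) p"
      by (rule epow_mono[OF kG_A[OF s] p])
    also have "\<dots> = ennreal (CC \<phi> powr p) * epow (kappa_G (E_set (pi/2)) x) p" by (rule epow_cmult[OF CC_pos[OF s] p])
    finally show ?thesis .
  qed
  have "U_energy p (E_set \<phi>) \<le> (\<integral>\<^sup>+x. indicator (E_set (pi/2)) x * epow (kappa_G (E_set \<phi>) (Amap \<phi> x)) p \<partial>H1)"
    unfolding U_energy_def by (rule CV[OF s])
  also have "\<dots> \<le> ennreal (CC \<phi> powr p) * U_energy p (E_set (pi/2))"
    unfolding U_energy_def by (intro lift[OF cp] Kb)
  finally show ?thesis .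
qed

lemma zero_energies:
  assumes s: "sin \<phi> = 0" and p: "0 < p"
  shows "U_energy p (E_set \<phi>) = 0" "I_energy p (E_set \<phi>) = 0" "M_energy p (E_set \<phi>) = 0"
proof -
  have ki: "kappa_i (E_set \<phi>) x y = 0" if "x \<in> E_set \<phi>" "y \<in> E_set \<phi>" for x y
    unfolding kappa_i_def using zero_case[OF s that] by (simp add: SUP_constant bot_ennreal)
  have kg: "kappa_G (E_set \<phi>) x = 0" if "x \<in> E_set \<phi>" for x
    unfolding kappa_G_def using zero_case[OF s that] by (simp add: mem_Times_iff SUP_constant bot_ennreal)
  have e0: "epow 0 p = 0" by (simp add: epow_def)
  have z1: "indicator (E_set \<phi>) x * epow (kappa_G (E_set \<phi>) x) p = (0::ennreal)" for x
    by (cases "x \<in> E_set \<phi>") (simp_all add: kg e0)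
  show "U_energy p (E_set \<phi>) = 0" unfolding U_energy_def z1 by simp
  have z2: "indicator (E_set \<phi>) x * indicator (E_set \<phi>) y * epow (kappa_i (E_set \<phi>) x y) p = (0::ennreal)" for x y
    by (cases "x \<in> E_set \<phi>"; cases "y \<in> E_set \<phi>") (simp_all add: ki e0)
  show "I_energy p (E_set \<phi>) = 0" unfolding I_energy_def z2 by simp
  have z3: "indicator (E_set \<phi>) x * indicator (E_set \<phi>) y * indicator (E_set \<phi>) z * ennreal (menger_kappa x y z powr p) = (0::ennreal)" for x y z
    by (cases "x \<in> E_set \<phi>"; cases "y \<in> E_set \<phi>"; cases "z \<in> E_set \<phi>") (simp_all add: zero_case[OF s])
  show "M_energy p (E_set \<phi>) = 0" unfolding M_energy_def z3 by simp
qed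

theorem mainTheorem2:
  fixes \<phi> :: real
  shows "\<exists>c::real. c > 0 \<and> (\<forall>p::real. p > 0 \<longrightarrow>
           U_energy p (E_set \<phi>) \<le> ennreal (c powr p) * U_energy p (E_set (pi/2)) \<and>
           I_energy p (E_set \<phi>) \<le> ennreal (c powr p) * I_energy p (E_set (pi/2)) \<and>
           M_energy p (E_set \<phi>) \<le> ennreal (c powr p) * M_energy p (E_set (pi/2)))"
proof (cases "sin \<phi> = 0")
  case True
  then show ?thesis by (intro exI[of _ 1]) (simp add: zero_energies)
next
  case False
  then show ?thesis using CC_pos[OF False] U_main[OF False] I_main[OF False] M_main[OF False]
    by (intro exI[of _ "CC \<phi>"]) blast
qed

end
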